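(* Let $C_*>1$. There is a constant $C>0$ depending only on $C_*$ such that the following holds. Let $\mathscr{T}$ be a $C_*$-regular triangular complex in $\mathbb{R}^3$ with chosen triangle unit normals $\bar n(\kappa)$, and let $n$ be a unit edge director on $\mathscr{T}$. Then for every edge $e=\kappa\cap\kappa'\in\mathscr{E}(\mathscr{T})$, \[ |n(e)-\bar n(\kappa)|\le C\,(\mathrm{diam}\,\kappa)\,|Dn_\kappa|. \]
   Context: A triangle is $\kappa=\mathrm{conv}(x,y,z)\subset\mathbb{R}^3$ with $x,y,z$ not collinear; its edges are $[x,y],[y,z],[x,z]$; its unit normal $\bar n(\kappa)$ is one of the two vectors $\pm\frac{(y-x)\times(z-x)}{|(y-x)\times(z-x)|}$ (fixed by a choice). A triangular complex is a finite family of triangles, any two distinct of which intersect in the empty set, a common vertex, or a whole common edge; $\mathscr{E}(\mathscr{T})$ is its set of edges. It is $C_*$-regular if $\mathcal{H}^2(\kappa)\ge C_*^{-1}(\mathrm{diam}\,\kappa)^2$ for all $\kappa$. A unit edge director is a map $n:\mathscr{E}(\mathscr{T})\to S^2$ with $n(e)\cdot\tau(e)=0$ (where $\tau(e)$ is a unit vector along $e$) and $n(e)\cdot\bar n(\kappa)\ge0$ for every triangle $\kappa$ containing $e$. On each $\kappa$, $n$ is extended to the unique affine map $\kappa\to\mathbb{R}^3$ taking the value $n(e)$ at the midpoint of each edge $e$ of $\kappa$; $Dn_\kappa\in\mathbb{R}^{3\times3}$ is its (constant) gradient, viewed as a linear map on the plane of $\kappa$ precomposed with the orthogonal projection onto that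 plane; $|\cdot|$ is a matrix norm. *)

theory Defs
  imports "HOL-Analysis.Analysis"
begin

type_synonym pt = "real^3"

definition is_tri_rep :: "pt set \<Rightarrow> pt \<Rightarrow> pt \<Rightarrow> pt \<Rightarrow> bool" where
  "is_tri_rep K x y z \<longleftrightarrow> \<not> collinear {x, y, z} \<and> K = convex hull {x, y, z}"

definition triangle :: "pt set \<Rightarrow> bool" where
  "triangle K \<longleftrightarrow> (\<exists>x y z. is_tri_rep K x y z)"

definition tri_vertices :: "pt set \<Rightarrow> pt set" where
  "tri_vertices K = {x. \<exists>y z. is_tri_rep K x y z}"

definition tri_edges :: "pt set \<Rightarrow> pt set set" where
  "tri_edges K = {convex hull {x, y} | x y. \<exists>z. is_tri_rep K x y z}"

definition tri_complex :: "pt set set \<Rightarrow> bool" where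
  "tri_complex T \<longleftrightarrow> finite T \<and> (\<forall>K\<in>T. triangle K) \<and>
     (\<forall>K\<in>T. \<forall>K'\<in>T. K \<noteq> K' \<longrightarrow>
        K \<inter> K' = {}
      \<or> (\<exists>v. v \<in> tri_vertices K \<and> v \<in> tri_vertices K' \<and> K \<inter> K' = {v})
      \<or> (\<exists>e. e \<in> tri_edges K \<and> e \<in> tri_edges K' \<and> K \<inter> K' = e))"

definition complex_edges :: "pt set set \<Rightarrow> pt set set" where
  "complex_edges T = (\<Union>K\<in>T. tri_edges K)"

definition tri_area :: "pt set \<Rightarrow> real" where
  "tri_area K = (THE a. \<exists>x y z. is_tri_rep K x y z \<and> a = norm (cross3 (y - x) (z - x)) / 2)"

definition regular_complex :: "real \<Rightarrow> pt set set \<Rightarrow> bool" where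
  "regular_complex Cs T \<longleftrightarrow> (\<forall>K\<in>T. tri_area K \<ge> (diameter K)\<^sup>2 / Cs)"

definition normal_choice :: "pt set set \<Rightarrow> (pt set \<Rightarrow> pt) \<Rightarrow> bool" where
  "normal_choice T nb \<longleftrightarrow> (\<forall>K\<in>T. \<exists>x y z. is_tri_rep K x y z \<and>
      (nb K = (1 / norm (cross3 (y - x) (z - x))) *\<^sub>R cross3 (y - x) (z - x)
     \<or> nb K = - ((1 / norm (cross3 (y - x) (z - x))) *\<^sub>R cross3 (y - x) (z - x))))"

definition unit_edge_director :: "pt set set \<Rightarrow> (pt set \<Rightarrow> pt) \<Rightarrow> (pt set \<Rightarrow> pt) \<Rightarrow> bool" where
  "unit_edge_director T nb n \<longleftrightarrow>
     (\<forall>e\<in>complex_edges T. norm (n e) = 1 \<and>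
        (\<forall>x y. x \<noteq> y \<and> e = convex hull {x, y} \<longrightarrow> n e \<bullet> ((1 / norm (y - x)) *\<^sub>R (y - x)) = 0)) \<and>
     (\<forall>K\<in>T. \<forall>e\<in>tri_edges K. n e \<bullet> nb K \<ge> 0)"

text \<open>Gradient of the affine interpolant of n on K (values n(e) at edge midpoints),
  as a linear map on the plane of K precomposed with the orthogonal projection onto it,
  represented as a 3x3 matrix.\<close>
definition tri_grad :: "(pt set \<Rightarrow> pt) \<Rightarrow> pt set \<Rightarrow> real^3^3" where
  "tri_grad n K = (THE D. \<exists>x y z. is_tri_rep K x y z \<and>
      (\<exists>c::pt. c + D *v midpoint x y = n (convex hull {x, y}) \<and>
               c + D *v midpoint y z = n (convex hull {y, z}) \<and>
               c + D *v midpoint x z = n (convex hull {x, z})) \<and>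
      (\<forall>w. w \<bullet> (y - x) = 0 \<and> w \<bullet> (z - x) = 0 \<longrightarrow> D *v w = 0))"

end

theory Submission
  imports Defs
begin

lemma rep_distinct: "is_tri_rep K x y z \<Longrightarrow> x \<noteq> y \<and> y \<noteq> z \<and> x \<noteq> z"
  unfolding is_tri_rep_def by (auto simp: collinear_2 insert_commute)

lemma rep_cross_nz: "is_tri_rep K x y z \<Longrightarrow> cross3 (y - x) (z - x) \<noteq> 0"
proof -
  assume a: "is_tri_rep K x y z"
  have "\<not> collinear {y, x, z}" using a unfolding is_tri_rep_def by (simp add: insert_commute)
  then have "\<not> collinear {0, y - x, z - x}" by (subst (asm) collinear_3) auto
  then show ?thesis using cross_eq_0 by metis
qed

lemma rep_vertices: "is_tri_rep K x y z \<Longrightarrow> {x, y, z} = {v. v extreme_point_of K}"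
proof -
  assume a: "is_tri_rep K x y z"
  then have "\<not> affine_dependent {x, y, z}" unfolding is_tri_rep_def
    using affine_dependent_imp_collinear_3 by blast
  then show ?thesis using a unfolding is_tri_rep_def
    using extreme_point_of_convex_hull_affine_independent by blast
qed

lemma rep_same: "is_tri_rep K x y z \<Longrightarrow> is_tri_rep K a b c \<Longrightarrow> {a, b, c} = {x, y, z}"
  using rep_vertices by blast

lemma perm3:
  assumes "{a, b, c} = {x, y, z}" "a \<noteq> b" "b \<noteq> c" "a \<noteq> c" "P x y z"
    and s1: "\<And>x y z. P x y z \<Longrightarrow> P y x z" and s2: "\<And>x y z. P x y z \<Longrightarrow> P x z y"
  shows "P a b c"
proof -
  have m: "a \<in> {x,y,z}" "b \<in> {x,y,z}" "c \<in> {x,y,z}" using assms(1) by blast+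
  have p6: "P x y z" "P x z y" "P y x z" "P y z x" "P z x y" "P z y x"
    using assms(5) s1 s2 by blast+
  show ?thesis using m assms(2-4) p6
    by (elim insertE emptyE; simp)
qed

lemma cross_swap12: "cross3 (x - y) (z - y) = - cross3 (y - x) (z - x)"
  by (simp add: cross3_simps)
lemma cross_swap23: "cross3 (z - x) (y - x) = - cross3 (y - x) (z - x)"
  by (simp add: cross3_simps)

lemma rep_cross: "is_tri_rep K x y z \<Longrightarrow> is_tri_rep K a b c \<Longrightarrow>
   cross3 (b - a) (c - a) = cross3 (y - x) (z - x) \<or> cross3 (b - a) (c - a) = - cross3 (y - x) (z - x)"
proof -
  assume r: "is_tri_rep K x y z" "is_tri_rep K a b c"
  let ?P = "\<lambda>a b c. cross3 (b - a) (c - a) = cross3 (y - x) (z - x) \<or> cross3 (b - a) (c - a) = - cross3 (y - x) (z - x)"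
  have "?P a b c"
  proof (rule perm3[of a b c x y z ?P])
    show "{a, b, c} = {x, y, z}" using rep_same r by blast
    show "a \<noteq> b" "b \<noteq> c" "a \<noteq> c" using rep_distinct r(2) by blast+
    show "?P x y z" by simp
    show "?P q p r" if "?P p q r" for p q r using that by (metis cross_swap12 minus_minus)
    show "?P p r q" if "?P p q r" for p q r using that by (metis cross_swap23 minus_minus)
  qed
  then show ?thesis .
qed


lemma G_nz: fixes u v :: "real^3" assumes "cross3 u v \<noteq> 0"
  shows "(u \<bullet> u) * (v \<bullet> v) - (u \<bullet> v)^2 \<noteq> 0"
proof -
  have "(norm (cross3 u v))\<^sup>2 + (u \<bullet> v)\<^sup>2 = (norm u * norm v)\<^sup>2" by (rule norm_cross_dot)
  then have "(u \<bullet> u) * (v \<bullet> v) - (u \<bullet> v)^2 = (norm (cross3 u v))\<^sup>2"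
    by (simp add: power2_norm_eq_inner power_mult_distrib)
  then show ?thesis using assms by simp
qed

lemma decomp: fixes u v w :: "real^3" assumes "cross3 u v \<noteq> 0"
  shows "\<exists>a b w'. w = a *\<^sub>R u + b *\<^sub>R v + w' \<and> w' \<bullet> u = 0 \<and> w' \<bullet> v = 0"
proof -
  define G where "G = (u \<bullet> u) * (v \<bullet> v) - (u \<bullet> v)^2"
  have G: "G \<noteq> 0" using G_nz[OF assms] G_def by simp
  define a where "a = ((v \<bullet> v) * (w \<bullet> u) - (u \<bullet> v) * (w \<bullet> v)) / G"
  define b where "b = ((u \<bullet> u) * (w \<bullet> v) - (u \<bullet> v) * (w \<bullet> u)) / G"
  define w' where "w' = w - a *\<^sub>R u - b *\<^sub>R v"
  have "w' \<bullet> u = w \<bullet> u - a * (u \<bullet> u) - b * (u \<bullet> v)"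
    by (simp add: w'_def inner_diff_left inner_diff_right inner_commute)
  also have "\<dots> = 0" unfolding a_def b_def using G
    by (simp add: field_simps G_def power2_eq_square; simp add: algebra_simps)
  finally have 1: "w' \<bullet> u = 0" .
  have "w' \<bullet> v = w \<bullet> v - a * (u \<bullet> v) - b * (v \<bullet> v)"
    by (simp add: w'_def inner_diff_left inner_diff_right inner_commute)
  also have "\<dots> = 0" unfolding a_def b_def using G
    by (simp add: field_simps G_def power2_eq_square; simp add: algebra_simps)
  finally have 2: "w' \<bullet> v = 0" .
  have "w = a *\<^sub>R u + b *\<^sub>R v + w'" by (simp add: w'_def)
  then show ?thesis using 1 2 by blast
qed

definition gradQ :: "(pt set \<Rightarrow> pt) \<Rightarrow> pt \<Rightarrow> pt \<Rightarrow> pt \<Rightarrow> real^3^3 \<Rightarrow> bool" where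
  "gradQ n x y z D \<longleftrightarrow> (\<exists>c::pt. c + D *v midpoint x y = n (convex hull {x, y}) \<and>
               c + D *v midpoint y z = n (convex hull {y, z}) \<and>
               c + D *v midpoint x z = n (convex hull {x, z})) \<and>
      (\<forall>w. w \<bullet> (y - x) = 0 \<and> w \<bullet> (z - x) = 0 \<longrightarrow> D *v w = 0)"

lemma tri_grad_alt: "tri_grad n K = (THE D. \<exists>x y z. is_tri_rep K x y z \<and> gradQ n x y z D)"
  unfolding tri_grad_def gradQ_def by simp

lemma aux_eq: "(c::pt) + a = b \<Longrightarrow> a = b - c" by (simp add: algebra_simps)

lemma gradQ_swap12: assumes "gradQ n x y z D" shows "gradQ n y x z D"
proof -
  have e: "\<And>w. (w \<bullet> (x - y) = 0 \<and> w \<bullet> (z - y) = 0) = (w \<bullet> (y - x) = 0 \<and> w \<bullet> (z - x) = 0)"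
    by (auto simp: inner_diff_right)
  from assms obtain c where c: "c + D *v midpoint x y = n (convex hull {x, y})"
     "c + D *v midpoint y z = n (convex hull {y, z})"
     "c + D *v midpoint x z = n (convex hull {x, z})"
    and p: "\<forall>w. w \<bullet> (y - x) = 0 \<and> w \<bullet> (z - x) = 0 \<longrightarrow> D *v w = 0"
    unfolding gradQ_def by blast
  have h: "midpoint y x = midpoint x y" "convex hull {y,x} = convex hull {x,y}"
    by (simp_all add: midpoint_sym insert_commute)
  show ?thesis unfolding gradQ_def e h using c p by blast
qed

lemma gradQ_swap23: assumes "gradQ n x y z D" shows "gradQ n x z y D"
proof -
  have e: "\<And>w. (w \<bullet> (z - x) = 0 \<and> w \<bullet> (y - x) = 0) = (w \<bullet> (y - x) = 0 \<and> w \<bullet> (z - x) = 0)"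
    by auto
  from assms obtain c where c: "c + D *v midpoint x y = n (convex hull {x, y})"
     "c + D *v midpoint y z = n (convex hull {y, z})"
     "c + D *v midpoint x z = n (convex hull {x, z})"
    and p: "\<forall>w. w \<bullet> (y - x) = 0 \<and> w \<bullet> (z - x) = 0 \<longrightarrow> D *v w = 0"
    unfolding gradQ_def by blast
  have h: "midpoint z y = midpoint y z" "convex hull {z,y} = convex hull {y,z}"
    by (simp_all add: midpoint_sym insert_commute)
  show ?thesis unfolding gradQ_def e h using c p by blast
qed

lemma gradQ_unique:
  assumes r: "is_tri_rep K x y z" and q1: "gradQ n x y z D1" and q2: "gradQ n x y z D2"
  shows "D1 = D2"
proof -
  define u where "u = y - x"
  define v where "v = z - x"
  have nz: "cross3 u v \<noteq> 0" using rep_cross_nz[OF r] u_def v_def by simp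
  obtain c1 where c1: "c1 + D1 *v midpoint x y = n (convex hull {x, y})"
     "c1 + D1 *v midpoint y z = n (convex hull {y, z})"
     "c1 + D1 *v midpoint x z = n (convex hull {x, z})" using q1 unfolding gradQ_def by blast
  obtain c2 where c2: "c2 + D2 *v midpoint x y = n (convex hull {x, y})"
     "c2 + D2 *v midpoint y z = n (convex hull {y, z})"
     "c2 + D2 *v midpoint x z = n (convex hull {x, z})" using q2 unfolding gradQ_def by blast
  have m1: "midpoint y z - midpoint x y = (1/2) *\<^sub>R v"
    by (simp add: midpoint_def v_def algebra_simps)
  have m2: "midpoint x z - midpoint x y = (1/2) *\<^sub>R (v - u)"
    by (simp add: midpoint_def v_def u_def algebra_simps)
  have "D1 *v (midpoint y z - midpoint x y) = D2 *v (midpoint y z - midpoint x y)"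
    using c1[THEN aux_eq] c2[THEN aux_eq] by (simp add: matrix_vector_mult_diff_distrib)
  then have ev: "D1 *v v = D2 *v v" unfolding m1 by (simp add: matrix_vector_mult_scaleR)
  have "D1 *v (midpoint x z - midpoint x y) = D2 *v (midpoint x z - midpoint x y)"
    using c1[THEN aux_eq] c2[THEN aux_eq] by (simp add: matrix_vector_mult_diff_distrib)
  then have "D1 *v (v - u) = D2 *v (v - u)" unfolding m2 by (simp add: matrix_vector_mult_scaleR)
  then have eu: "D1 *v u = D2 *v u" using ev by (simp add: matrix_vector_mult_diff_distrib)
  have ew: "D1 *v w = D2 *v w" if "w \<bullet> u = 0" "w \<bullet> v = 0" for w
    using q1 q2 that unfolding gradQ_def u_def v_def by simp
  show ?thesis unfolding matrix_eq
  proof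
    fix w
    obtain a b w' where w: "w = a *\<^sub>R u + b *\<^sub>R v + w'" "w' \<bullet> u = 0" "w' \<bullet> v = 0"
      using decomp[OF nz] by blast
    show "D1 *v w = D2 *v w" unfolding w(1)
      by (simp add: matrix_vector_right_distrib matrix_vector_mult_scaleR eu ev ew w)
  qed
qed


lemma gradQ_exists: assumes r: "is_tri_rep K x y z" shows "\<exists>D. gradQ n x y z D"
proof -
  define u where "u = y - x"
  define v where "v = z - x"
  have nz: "cross3 u v \<noteq> 0" using rep_cross_nz[OF r] u_def v_def by simp
  define G where "G = (u \<bullet> u) * (v \<bullet> v) - (u \<bullet> v)^2"
  have G: "G \<noteq> 0" using G_nz[OF nz] G_def by simp
  define p where "p = (1/G) *\<^sub>R ((v \<bullet> v) *\<^sub>R u - (u \<bullet> v) *\<^sub>R v)"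
  define q where "q = (1/G) *\<^sub>R ((u \<bullet> u) *\<^sub>R v - (u \<bullet> v) *\<^sub>R u)"
  have vu: "v \<bullet> u = u \<bullet> v" by (rule inner_commute)
  have pu: "p \<bullet> u = 1"
    unfolding p_def inner_scaleR_left inner_diff_left vu using G G_def by (simp add: power2_eq_square mult.commute)
  have pv: "p \<bullet> v = 0"
    unfolding p_def inner_scaleR_left inner_diff_left vu by (simp add: mult.commute)
  have qu: "q \<bullet> u = 0"
    unfolding q_def inner_scaleR_left inner_diff_left vu by (simp add: mult.commute)
  have qv: "q \<bullet> v = 1"
    unfolding q_def inner_scaleR_left inner_diff_left vu using G G_def by (simp add: power2_eq_square mult.commute)
  define n1 where "n1 = n (convex hull {x, y})"
  define n2 where "n2 = n (convex hull {y, z})"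
  define n3 where "n3 = n (convex hull {x, z})"
  define \<alpha> where "\<alpha> = 2 *\<^sub>R (n2 - n3)"
  define \<beta> where "\<beta> = 2 *\<^sub>R (n2 - n1)"
  define f where "f w = (p \<bullet> w) *\<^sub>R \<alpha> + (q \<bullet> w) *\<^sub>R \<beta>" for w
  have lin: "linear f" unfolding linear_iff f_def
    by (simp add: inner_add_right algebra_simps)
  define D where "D = matrix f"
  have Dw: "D *v w = f w" for w by (simp add: D_def matrix_vector_mul(2)[OF lin])
  have fu: "f u = \<alpha>" by (simp add: f_def pu qu inner_commute)
  have fv: "f v = \<beta>" by (simp add: f_def pv qv inner_commute)
  have mxy: "midpoint x y = x + (1/2) *\<^sub>R u" by (simp add: midpoint_def u_def vec_eq_iff field_simps)
  have myz: "midpoint y z = x + (1/2) *\<^sub>R u + (1/2) *\<^sub>R v"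
    by (simp add: midpoint_def u_def v_def vec_eq_iff field_simps)
  have mxz: "midpoint x z = x + (1/2) *\<^sub>R v" by (simp add: midpoint_def v_def vec_eq_iff field_simps)
  define c where "c = n1 - f x - (1/2) *\<^sub>R \<alpha>"
  have e1: "c + D *v midpoint x y = n1"
    by (simp add: Dw mxy linear_add[OF lin] linear_cmul[OF lin] fu c_def)
  have e2: "c + D *v midpoint y z = n2"
    by (simp add: Dw myz linear_add[OF lin] linear_cmul[OF lin] fu fv c_def \<beta>_def algebra_simps)
  have e3: "c + D *v midpoint x z = n3"
    by (simp add: Dw mxz linear_add[OF lin] linear_cmul[OF lin] fv c_def \<alpha>_def \<beta>_def algebra_simps)
  have pl: "D *v w = 0" if "w \<bullet> (y - x) = 0" "w \<bullet> (z - x) = 0" for w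
  proof -
    have "u \<bullet> w = 0" "v \<bullet> w = 0" using that u_def v_def by (auto simp: inner_commute)
    then have "p \<bullet> w = 0" "q \<bullet> w = 0" unfolding p_def q_def inner_scaleR_left inner_diff_left
      by simp_all
    then show ?thesis by (simp add: Dw f_def)
  qed
  have "gradQ n x y z D" unfolding gradQ_def using e1 e2 e3 pl n1_def n2_def n3_def by blast
  then show ?thesis by blast
qed

lemma tri_grad_Q: assumes r: "is_tri_rep K x y z" shows "gradQ n x y z (tri_grad n K)"
proof -
  have tr: "gradQ n x y z D" if "is_tri_rep K a b c" "gradQ n a b c D" for a b c D
  proof (rule perm3[of x y z a b c "\<lambda>x y z. gradQ n x y z D"])
    show "{x, y, z} = {a, b, c}" using rep_same r that(1) by blast
    show "x \<noteq> y" "y \<noteq> z" "x \<noteq> z" using rep_distinct r by blast+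
    show "gradQ n a b c D" by fact
    show "gradQ n q p r D" if "gradQ n p q r D" for p q r using that by (rule gradQ_swap12)
    show "gradQ n p r q D" if "gradQ n p q r D" for p q r using that by (rule gradQ_swap23)
  qed
  have ex1: "\<exists>!D. \<exists>a b c. is_tri_rep K a b c \<and> gradQ n a b c D"
  proof -
    obtain D where "gradQ n x y z D" using gradQ_exists[OF r] by blast
    moreover have "D1 = D2" if h1: "\<exists>a b c. is_tri_rep K a b c \<and> gradQ n a b c D1"
        and h2: "\<exists>a b c. is_tri_rep K a b c \<and> gradQ n a b c D2" for D1 D2
    proof -
      obtain a1 b1 c1 where 1: "is_tri_rep K a1 b1 c1" "gradQ n a1 b1 c1 D1" using h1 by blast
      obtain a2 b2 c2 where 2: "is_tri_rep K a2 b2 c2" "gradQ n a2 b2 c2 D2" using h2 by blast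
      show ?thesis using gradQ_unique[OF r tr[OF 1] tr[OF 2]] .
    qed
    ultimately show ?thesis using r by (intro ex1I[of _ D]) blast+
  qed
  then have "\<exists>a b c. is_tri_rep K a b c \<and> gradQ n a b c (tri_grad n K)"
    unfolding tri_grad_alt by (rule theI')
  then obtain a b c where "is_tri_rep K a b c" "gradQ n a b c (tri_grad n K)" by blast
  then show ?thesis by (rule tr)
qed

lemma nb_rep: assumes "normal_choice T nb" "K \<in> T" "is_tri_rep K x y z"
  shows "\<exists>k. nb K = k *\<^sub>R cross3 (y - x) (z - x) \<and> norm (nb K) = 1"
proof -
  obtain a b c where r: "is_tri_rep K a b c" and
    h: "nb K = (1 / norm (cross3 (b - a) (c - a))) *\<^sub>R cross3 (b - a) (c - a)
     \<or> nb K = - ((1 / norm (cross3 (b - a) (c - a))) *\<^sub>R cross3 (b - a) (c - a))"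
    using assms(1,2) unfolding normal_choice_def by blast
  define N' where "N' = cross3 (b - a) (c - a)"
  define Nc where "Nc = cross3 (y - x) (z - x)"
  have nz: "N' \<noteq> 0" using rep_cross_nz[OF r] N'_def by simp
  have h': "nb K = (1 / norm N') *\<^sub>R N' \<or> nb K = (- (1 / norm N')) *\<^sub>R N'"
    using h N'_def by simp
  have s: "N' = Nc \<or> N' = - Nc" using rep_cross[OF assms(3) r] N'_def Nc_def by simp
  have nn: "norm ((1 / norm N') *\<^sub>R N') = 1" "norm ((- (1 / norm N')) *\<^sub>R N') = 1"
    using nz by simp_all
  have "\<exists>k. nb K = k *\<^sub>R Nc"
  proof (cases "N' = Nc")
    case True
    then show ?thesis using h' by blast
  next
    case False
    then have e: "N' = - Nc" using s by blast
    have "nb K = (-(1/norm N')) *\<^sub>R Nc \<or> nb K = (1/norm N') *\<^sub>R Nc" using h' e by simp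
    then show ?thesis by blast
  qed
  moreover have "norm (nb K) = 1" using h' nn by metis
  ultimately show ?thesis using Nc_def by blast
qed

lemma area_rep: assumes "is_tri_rep K x y z"
  shows "tri_area K = norm (cross3 (y - x) (z - x)) / 2"
  unfolding tri_area_def
proof (rule the_equality)
  show "\<exists>a b c. is_tri_rep K a b c \<and> norm (cross3 (y - x) (z - x)) / 2 = norm (cross3 (b - a) (c - a)) / 2"
    using assms by blast
  show "t = norm (cross3 (y - x) (z - x)) / 2" if "\<exists>a b c. is_tri_rep K a b c \<and> t = norm (cross3 (b - a) (c - a)) / 2" for t
  proof -
    note hh = that
    obtain a b c where r: "is_tri_rep K a b c" "t = norm (cross3 (b - a) (c - a)) / 2" using hh by blast
    have "norm (cross3 (b - a) (c - a)) = norm (cross3 (y - x) (z - x))"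
      using rep_cross[OF assms r(1)] by (elim disjE) simp_all
    then show ?thesis using r(2) by simp
  qed
qed

lemma norm_mv: fixes A :: "real^'n^'m" shows "norm (A *v x) \<le> norm A * norm x"
proof -
  have c: "(A *v x) $ i = A $ i \<bullet> x" for i
    by (simp add: matrix_vector_mult_def inner_vec_def)
  have "norm (A *v x) = L2_set (\<lambda>i. norm ((A *v x) $ i)) UNIV" by (simp add: norm_vec_def)
  also have "\<dots> \<le> L2_set (\<lambda>i. norm x * norm (A $ i)) UNIV"
  proof (rule L2_set_mono)
    fix i show "norm ((A *v x) $ i) \<le> norm x * norm (A $ i)"
      unfolding c real_norm_def by (metis Cauchy_Schwarz_ineq2 mult.commute)
  qed simp
  also have "\<dots> = norm x * norm A"
    by (simp add: L2_set_right_distrib norm_vec_def)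
  finally show ?thesis by (simp add: mult.commute)
qed

lemma cross_cross: fixes w u s :: "real^3"
  shows "cross3 w (cross3 u s) = (w \<bullet> s) *\<^sub>R u - (w \<bullet> u) *\<^sub>R s"
  by (simp add: cross3_simps forall_3)


lemma core:
  fixes u s v n2 N :: "real^3" and k Cs d B :: real
  assumes v1: "norm v = 1" and vu: "v \<bullet> u = 0" and n2s: "n2 \<bullet> s = 0"
    and Nk: "N = k *\<^sub>R cross3 u s" and N1: "norm N = 1" and vN: "v \<bullet> N \<ge> 0"
    and B: "norm (v - n2) \<le> B" and ud: "norm u \<le> d" and sd: "norm s \<le> d"
    and area: "norm (cross3 u s) \<ge> 2 * d^2 / Cs" and d: "d > 0" and Cs: "Cs > 0"
  shows "norm (v - N) \<le> Cs * B"
proof -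
  define Nc where "Nc = cross3 u s"
  define a where "a = v \<bullet> N"
  define w where "w = v - a *\<^sub>R N"
  have Ncpos: "norm Nc \<ge> 2*d^2/Cs" using area Nc_def by simp
  have "2*d^2/Cs > 0" using d Cs by simp
  hence Nc0: "norm Nc > 0" using Ncpos by linarith
  have NN: "N \<bullet> N = 1" using N1 by (metis power2_norm_eq_inner power_one)
  have vv: "v \<bullet> v = 1" using v1 by (metis power2_norm_eq_inner power_one)
  have "N \<bullet> u = k * (u \<bullet> cross3 u s)" by (simp add: Nk inner_commute)
  then have Nu: "N \<bullet> u = 0" by (simp add: dot_cross_self)
  have "N \<bullet> s = k * (cross3 u s \<bullet> s)" by (simp add: Nk)
  then have Ns: "N \<bullet> s = 0" by (simp add: dot_cross_self)
  have wu: "w \<bullet> u = 0" by (simp add: w_def inner_diff_left vu Nu)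
  have wN: "w \<bullet> N = 0" by (simp add: w_def inner_diff_left NN a_def)
  have k0: "k \<noteq> 0" using Nk N1 by auto
  have "w \<bullet> N = k * (w \<bullet> Nc)" by (simp add: Nk Nc_def)
  then have wNc: "w \<bullet> Nc = 0" using wN k0 by simp
  have ws: "w \<bullet> s = (v - n2) \<bullet> s" by (simp add: w_def inner_diff_left Ns n2s)
  have B0: "0 \<le> B" using B norm_ge_zero order_trans by blast
  have "\<bar>w \<bullet> s\<bar> \<le> norm (v - n2) * norm s" unfolding ws by (rule Cauchy_Schwarz_ineq2)
  also have "\<dots> \<le> B * d" using B sd B0 by (intro mult_mono) auto
  finally have wsB: "\<bar>w \<bullet> s\<bar> \<le> B * d" .
  have cc: "cross3 w Nc = (w \<bullet> s) *\<^sub>R u" unfolding Nc_def cross_cross wu by simp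
  have lag: "(norm (cross3 w Nc))\<^sup>2 + (w \<bullet> Nc)\<^sup>2 = (norm w * norm Nc)\<^sup>2" by (rule norm_cross_dot)
  then have "(norm w * norm Nc)\<^sup>2 = (\<bar>w \<bullet> s\<bar> * norm u)\<^sup>2" unfolding cc wNc by simp
  then have eq: "norm w * norm Nc = \<bar>w \<bullet> s\<bar> * norm u"
    by (subst (asm) power2_eq_iff_nonneg) auto
  also have "\<dots> \<le> (B * d) * d" using wsB ud B0 d by (intro mult_mono) auto
  finally have t1: "norm w * norm Nc \<le> B * d * d" .
  have "norm w * (2*d^2/Cs) \<le> norm w * norm Nc" using Ncpos by (intro mult_left_mono) auto
  with t1 have "norm w * (2*d^2/Cs) \<le> B * d * d" by linarith
  then have "norm w * (2*d^2/Cs) * Cs \<le> B * d * d * Cs" using Cs by (intro mult_right_mono) auto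
  then have "(2 * norm w) * d^2 \<le> (Cs * B) * d^2" using Cs by (simp add: power2_eq_square field_simps)
  then have wB: "2 * norm w \<le> Cs * B" using d by (simp add: mult_le_cancel_right)
  have a1: "a \<le> 1" using Cauchy_Schwarz_ineq2[of v N] v1 N1 a_def by simp
  have a0: "0 \<le> a" using vN a_def by simp
  have "(norm (v - N))\<^sup>2 = 2 - 2 * a"
    by (simp add: power2_norm_eq_inner inner_diff_left inner_diff_right vv NN a_def inner_commute)
  moreover have "(norm w)\<^sup>2 = 1 - a^2"
  proof -
    have vN': "N \<bullet> v = a" "v \<bullet> N = a" using a_def inner_commute by auto
    have "(norm w)\<^sup>2 = w \<bullet> w" by (simp add: power2_norm_eq_inner)
    also have "\<dots> = 1 - a^2" unfolding w_def
      by (simp add: inner_diff_left inner_diff_right vv NN vN' power2_eq_square)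
    finally show ?thesis .
  qed
  moreover have "0 \<le> (1 - a) * (1 + 2 * a)" using a0 a1 by simp
  ultimately have "(norm (v - N))\<^sup>2 \<le> (2 * norm w)\<^sup>2"
    by (simp add: power_mult_distrib) (simp add: algebra_simps power2_eq_square)
  then have "norm (v - N) \<le> 2 * norm w" by (rule power2_le_imp_le) simp
  then show ?thesis using wB by linarith
qed


lemma edge_nondeg: "e \<in> complex_edges T \<Longrightarrow> \<exists>p q. p \<noteq> q \<and> e = convex hull {p, q}"
  unfolding complex_edges_def tri_edges_def using rep_distinct by blast

lemma rep_rot: "is_tri_rep K x y z \<Longrightarrow> is_tri_rep K y z x"
  unfolding is_tri_rep_def by (simp add: insert_commute)

theorem lemma3p1:
  fixes Cs :: real
  assumes "Cs > 1"
  shows "\<exists>C>0. \<forall>(T :: (real^3) set set) nb n.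
           tri_complex T \<and> regular_complex Cs T \<and> normal_choice T nb \<and>
           unit_edge_director T nb n \<longrightarrow>
           (\<forall>K\<in>T. \<forall>K'\<in>T. \<forall>e. K \<noteq> K' \<and> e = K \<inter> K' \<and> e \<in> complex_edges T \<longrightarrow>
              norm (n e - nb K) \<le> C * diameter K * norm (tri_grad n K))"
proof (intro exI[of _ Cs] conjI allI impI ballI)
  show "Cs > 0" using assms by simp
  fix T :: "(real^3) set set" and nb n K K' e
  assume H: "tri_complex T \<and> regular_complex Cs T \<and> normal_choice T nb \<and> unit_edge_director T nb n"
    and KT: "K \<in> T" and K'T: "K' \<in> T"
    and E: "K \<noteq> K' \<and> e = K \<inter> K' \<and> e \<in> complex_edges T"
  have tc: "tri_complex T" and rg: "regular_complex Cs T" and nc: "normal_choice T nb"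
    and ud: "unit_edge_director T nb n" using H by auto
  obtain p q where pq: "p \<noteq> q" "e = convex hull {p, q}" using edge_nondeg E by blast
  have pe: "p \<in> e" "q \<in> e" using pq by (simp_all add: hull_inc)
  have "e \<in> tri_edges K"
  proof -
    have "K \<inter> K' = {}
      \<or> (\<exists>v. v \<in> tri_vertices K \<and> v \<in> tri_vertices K' \<and> K \<inter> K' = {v})
      \<or> (\<exists>e. e \<in> tri_edges K \<and> e \<in> tri_edges K' \<and> K \<inter> K' = e)"
      using tc KT K'T E unfolding tri_complex_def by blast
    then show ?thesis
    proof (elim disjE)
      assume "K \<inter> K' = {}" then show ?thesis using E pe by auto
    next
      assume "\<exists>v. v \<in> tri_vertices K \<and> v \<in> tri_vertices K' \<and> K \<inter> K' = {v}"
      then obtain v where "K \<inter> K' = {v}" by blast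
      then have "p = v" "q = v" using E pe by auto
      then show ?thesis using pq(1) by simp
    next
      assume "\<exists>e. e \<in> tri_edges K \<and> e \<in> tri_edges K' \<and> K \<inter> K' = e"
      then obtain e0 where "e0 \<in> tri_edges K" "K \<inter> K' = e0" by blast
      then show ?thesis using E by simp
    qed
  qed
  then obtain x y z where r: "is_tri_rep K x y z" and ee: "e = convex hull {x, y}"
    unfolding tri_edges_def by blast
  have dxyz: "x \<noteq> y" "y \<noteq> z" "x \<noteq> z" using rep_distinct r by auto
  define D where "D = tri_grad n K"
  have gq: "gradQ n x y z D" using tri_grad_Q[OF r] D_def by simp
  then obtain c where c: "c + D *v midpoint x y = n (convex hull {x, y})"
     "c + D *v midpoint y z = n (convex hull {y, z})"
    unfolding gradQ_def by blast
  define d where "d = diameter K"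
  have Kh: "K = convex hull {x, y, z}" using r unfolding is_tri_rep_def by simp
  have bK: "bounded K" unfolding Kh by (rule finite_imp_bounded_convex_hull) simp
  have inK: "x \<in> K" "y \<in> K" "z \<in> K" unfolding Kh by (simp_all add: hull_inc)
  have sub1: "convex hull {x, y} \<subseteq> K" unfolding Kh by (rule hull_mono) auto
  have sub2: "convex hull {y, z} \<subseteq> K" unfolding Kh by (rule hull_mono) auto
  have mK: "midpoint x y \<in> K" "midpoint y z \<in> K"
    using sub1 sub2 midpoint_in_closed_segment[of x y] midpoint_in_closed_segment[of y z]
    unfolding segment_convex_hull by blast+
  have dist_le: "dist a b \<le> d" if "a \<in> K" "b \<in> K" for a b
    unfolding d_def using diameter_bounded_bound[OF bK that] .
  have nu: "norm (y - x) \<le> d" using dist_le[OF inK(2) inK(1)] by (simp add: dist_norm)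
  have ns: "norm (z - y) \<le> d" using dist_le[OF inK(3) inK(2)] by (simp add: dist_norm)
  have nm: "norm (midpoint x y - midpoint y z) \<le> d" using dist_le[OF mK] by (simp add: dist_norm)
  have "0 < norm (y - x)" using dxyz by simp
  then have dpos: "d > 0" using nu by linarith
  have "n e - n (convex hull {y, z}) = D *v (midpoint x y - midpoint y z)"
    using c[THEN aux_eq] ee by (simp add: matrix_vector_mult_diff_distrib)
  then have "norm (n e - n (convex hull {y, z})) = norm (D *v (midpoint x y - midpoint y z))"
    by simp
  also have "\<dots> \<le> norm D * norm (midpoint x y - midpoint y z)" by (rule norm_mv)
  also have "\<dots> \<le> norm D * d" using nm by (intro mult_left_mono) auto
  finally have Bb: "norm (n e - n (convex hull {y, z})) \<le> norm D * d" .
  have eK2: "convex hull {y, z} \<in> tri_edges K" unfolding tri_edges_def using rep_rot[OF r] by blast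
  have ce2: "convex hull {y, z} \<in> complex_edges T" using eK2 KT unfolding complex_edges_def by blast
  have ue: "\<forall>e\<in>complex_edges T. norm (n e) = 1 \<and>
        (\<forall>x y. x \<noteq> y \<and> e = convex hull {x, y} \<longrightarrow> n e \<bullet> ((1 / norm (y - x)) *\<^sub>R (y - x)) = 0)"
    and sg: "\<forall>K\<in>T. \<forall>e\<in>tri_edges K. n e \<bullet> nb K \<ge> 0"
    using ud unfolding unit_edge_director_def by auto
  have ue1: "\<And>e. e \<in> complex_edges T \<Longrightarrow> norm (n e) = 1" using ue by blast
  have ue2: "\<And>e a b. e \<in> complex_edges T \<Longrightarrow> a \<noteq> b \<Longrightarrow> e = convex hull {a, b} \<Longrightarrow>
      n e \<bullet> ((1 / norm (b - a)) *\<^sub>R (b - a)) = 0" using ue by blast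
  have eT: "e \<in> complex_edges T" using E by blast
  have v1: "norm (n e) = 1" using ue1[OF eT] .
  have "n e \<bullet> ((1 / norm (y - x)) *\<^sub>R (y - x)) = 0" using ue2[OF eT dxyz(1) ee] .
  then have vu: "n e \<bullet> (y - x) = 0" using dxyz by simp
  have "n (convex hull {y, z}) \<bullet> ((1 / norm (z - y)) *\<^sub>R (z - y)) = 0" using ue2[OF ce2 dxyz(2) refl] .
  then have n2s: "n (convex hull {y, z}) \<bullet> (z - y) = 0" using dxyz by simp
  have vN: "n e \<bullet> nb K \<ge> 0" using sg KT \<open>e \<in> tri_edges K\<close> by blast
  obtain k where Nk0: "nb K = k *\<^sub>R cross3 (y - x) (z - x)" and N1: "norm (nb K) = 1"
    using nb_rep[OF nc KT r] by blast
  have cx: "cross3 (y - x) (z - y) = cross3 (y - x) (z - x)" by (simp add: cross3_simps)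
  have Nk: "nb K = k *\<^sub>R cross3 (y - x) (z - y)" using Nk0 cx by simp
  have "tri_area K \<ge> (diameter K)\<^sup>2 / Cs" using rg KT unfolding regular_complex_def by blast
  then have ar: "norm (cross3 (y - x) (z - y)) \<ge> 2 * d^2 / Cs"
    using area_rep[OF r] cx d_def by (simp add: mult.commute)
  have "norm (n e - nb K) \<le> Cs * (norm D * d)"
    by (rule core[OF v1 vu n2s Nk N1 vN Bb nu ns ar dpos]) (use assms in simp)
  then show "norm (n e - nb K) \<le> Cs * diameter K * norm (tri_grad n K)"
    by (simp add: D_def d_def mult_ac)
qed

end
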